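(* Let $K\in\{\mathbb R,\mathbb C,\mathbb H\}$ and let $(E,d)$ be a metric vector space over $K$ such that $d$ is asymptotically multiplicative, unbounded on every non-trivial linear subspace, and such that for every $C_1>1$ there exists $C_0\ge0$ with $d\big(\sum_{i=1}^n x_i,\sum_{i=1}^n y_i\big)\le C_1\sum_{i=1}^n d(x_i,y_i)+nC_0$ for all $n\ge2$ and $x_1,\dots,x_n,y_1,\dots,y_n\in E$. Let $d_0(x,y)=\int_{\mathbb U}d(ux,uy)\,d\mu(u)$ and $\delta_0(x,y)=\lim_{n\to+\infty}\frac1n d_0(nx,ny)$. Then $\delta_0$ is translation invariant, i.e. $\delta_0(x+z,y+z)=\delta_0(x,y)$ for all $x,y,z\in E$, and setting $\|x-y\|=\delta_0(x,y)$ defines a norm $\|\cdot\|$ on $E$ such that the distance $\|x-y\|$ is asymptotically isometric to $d_0$ and to $d$.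
   Context: A metric vector space is a topological vector space over $K$ whose topology is generated by the metric $d$. $\mathbb U=\{u\in K:|u|=1\}$, $\mu$ the right-invariant Haar probability measure on $\mathbb U$. $d$ is asymptotically multiplicative if for every $C_1>1$ there exist $C_2,C_3\ge0$ with $C_1^{-1}|\lambda|d(x,y)-C_2|\lambda|-C_3\le d(\lambda x,\lambda y)\le C_1|\lambda|d(x,y)+C_2|\lambda|+C_3$ for all $\lambda\in K$, $x,y\in E$. A distance $\rho$ is asymptotically isometric to a distance $\sigma$ if for every $A>1$ there is $B\ge0$ with $A^{-1}\sigma-B\le\rho\le A\sigma+B$ pointwise. (Under these hypotheses the limit defining $\delta_0$ exists.) *)

theory Defs
  imports "HOL-Analysis.Analysis" "HOL-Probability.Probability"
begin

definition left_vector_space :: "('k::ring_1 \<Rightarrow> 'e::ab_group_add \<Rightarrow> 'e) \<Rightarrow> bool" where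
  "left_vector_space smul \<longleftrightarrow>
     (\<forall>a x y. smul a (x + y) = smul a x + smul a y) \<and>
     (\<forall>a b x. smul (a + b) x = smul a x + smul b x) \<and>
     (\<forall>a b x. smul (a * b) x = smul a (smul b x)) \<and>
     (\<forall>x. smul 1 x = x)"

definition metric_vector_space ::
  "('k::real_normed_div_algebra \<Rightarrow> 'e::ab_group_add \<Rightarrow> 'e) \<Rightarrow> ('e \<Rightarrow> 'e \<Rightarrow> real) \<Rightarrow> bool" where
  "metric_vector_space smul d \<longleftrightarrow>
     left_vector_space smul \<and>
     Metric_space UNIV d \<and>
     continuous_map (prod_topology (Metric_space.mtopology UNIV d) (Metric_space.mtopology UNIV d))
        (Metric_space.mtopology UNIV d) (\<lambda>(x, y). x + y) \<and>
     continuous_map (prod_topology euclidean (Metric_space.mtopology UNIV d))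
        (Metric_space.mtopology UNIV d) (\<lambda>(a, x). smul a x)"

definition linear_subspace :: "('k::ring_1 \<Rightarrow> 'e::ab_group_add \<Rightarrow> 'e) \<Rightarrow> 'e set \<Rightarrow> bool" where
  "linear_subspace smul F \<longleftrightarrow> 0 \<in> F \<and> (\<forall>x\<in>F. \<forall>y\<in>F. x + y \<in> F) \<and> (\<forall>a. \<forall>x\<in>F. smul a x \<in> F)"

definition asymptotically_multiplicative ::
  "('k::real_normed_div_algebra \<Rightarrow> 'e \<Rightarrow> 'e) \<Rightarrow> ('e \<Rightarrow> 'e \<Rightarrow> real) \<Rightarrow> bool" where
  "asymptotically_multiplicative smul d \<longleftrightarrow>
     (\<forall>C1>1. \<exists>C2\<ge>0. \<exists>C3\<ge>0. \<forall>l x y.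
        d x y * norm l / C1 - C2 * norm l - C3 \<le> d (smul l x) (smul l y) \<and>
        d (smul l x) (smul l y) \<le> C1 * norm l * d x y + C2 * norm l + C3)"

definition asymptotically_isometric :: "('e \<Rightarrow> 'e \<Rightarrow> real) \<Rightarrow> ('e \<Rightarrow> 'e \<Rightarrow> real) \<Rightarrow> bool" where
  "asymptotically_isometric \<rho> \<sigma> \<longleftrightarrow>
     (\<forall>A>1. \<exists>B\<ge>0. \<forall>x y. \<sigma> x y / A - B \<le> \<rho> x y \<and> \<rho> x y \<le> A * \<sigma> x y + B)"

definition haar_prob_unit_sphere :: "'k::real_normed_div_algebra measure \<Rightarrow> bool" where
  "haar_prob_unit_sphere \<mu> \<longleftrightarrow>
     sets \<mu> = sets (restrict_space borel {u. norm u = 1}) \<and>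
     space \<mu> = {u. norm u = 1} \<and>
     prob_space \<mu> \<and>
     (\<forall>v. norm v = 1 \<longrightarrow> (\<forall>A\<in>sets \<mu>. emeasure \<mu> ((\<lambda>u. u * v) ` A) = emeasure \<mu> A))"

definition d0 :: "'k measure \<Rightarrow> ('k \<Rightarrow> 'e \<Rightarrow> 'e) \<Rightarrow> ('e \<Rightarrow> 'e \<Rightarrow> real) \<Rightarrow> 'e \<Rightarrow> 'e \<Rightarrow> real" where
  "d0 \<mu> smul d x y = (\<integral>u. d (smul u x) (smul u y) \<partial>\<mu>)"

definition delta0 ::
  "'k::real_normed_div_algebra measure \<Rightarrow> ('k \<Rightarrow> 'e \<Rightarrow> 'e) \<Rightarrow> ('e \<Rightarrow> 'e \<Rightarrow> real) \<Rightarrow> 'e \<Rightarrow> 'e \<Rightarrow> real" where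
  "delta0 \<mu> smul d x y = lim (\<lambda>n::nat. d0 \<mu> smul d (smul (of_nat n) x) (smul (of_nat n) y) / real n)"

definition is_norm :: "('k::real_normed_div_algebra \<Rightarrow> 'e::ab_group_add \<Rightarrow> 'e) \<Rightarrow> ('e \<Rightarrow> real) \<Rightarrow> bool" where
  "is_norm smul N \<longleftrightarrow>
     (\<forall>x. 0 \<le> N x) \<and> (\<forall>x. N x = 0 \<longleftrightarrow> x = 0) \<and>
     (\<forall>a x. N (smul a x) = norm a * N x) \<and> (\<forall>x y. N (x + y) \<le> N x + N y)"

end

theory Submission
  imports Defs
begin

lemma approx_fekete:
  fixes s :: "nat \<Rightarrow> real"
  assumes bnd: "\<And>n. 0 \<le> s n \<and> s n \<le> M"
    and KI: "\<And>C. C > 1 \<Longrightarrow> \<exists>D\<ge>0. \<forall>n m. 1 \<le> n \<longrightarrow> 1 \<le> m \<longrightarrow> s n \<le> C * s m + D / m + D * m / n"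
  shows "convergent s"
proof -
  have "seq_compact {0..M}" by (rule compact_imp_seq_compact) simp
  then obtain l r where lM: "l \<in> {0..M}" and r: "strict_mono r" and lim: "(s \<circ> r) \<longlonglongrightarrow> l"
    using bnd unfolding seq_compact_def by (metis atLeastAtMost_iff)
  have rge: "\<And>j. j \<le> r j" using r by (simp add: seq_suble)
  have rinf: "filterlim r at_top sequentially" using r by (simp add: filterlim_subseq)
  have "s \<longlonglongrightarrow> l"
  proof (rule order_tendstoI)
    fix a assume "a < l"
    define e where "e = l - a"
    have e: "e > 0" using \<open>a < l\<close> e_def by simp
    define C where "C = 1 + e / (4 * (M + 1))"
    have M0: "M \<ge> 0" using bnd[of 0] by linarith
    have C1: "C > 1" using e M0 by (simp add: C_def)
    have CM: "(C - 1) * M \<le> e / 4" using e M0 by (simp add: C_def field_simps)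
    obtain D where D: "D \<ge> 0" and KD: "\<And>n m. 1 \<le> n \<Longrightarrow> 1 \<le> m \<Longrightarrow> s n \<le> C * s m + D / m + D * m / n"
      using KI[OF C1] by blast
    obtain N where N: "real N \<ge> 4 * D / e + 1" by (meson real_arch_simple)
    have "s n > a" if n: "n \<ge> N" for n
    proof -
      have n1: "n \<ge> 1" and nD: "D / n \<le> e / 4"
      proof -
        have "real n \<ge> 4 * D / e + 1" using N n by linarith
        moreover have "4 * D / e \<ge> 0" using D e by simp
        ultimately show "n \<ge> 1" by linarith
        have "real n > 0" using \<open>real n \<ge> 4 * D / e + 1\<close> \<open>4 * D / e \<ge> 0\<close> by linarith
        moreover have "4 * D \<le> e * n" using \<open>real n \<ge> 4 * D / e + 1\<close> e by (simp add: field_simps)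
        ultimately show "D / n \<le> e / 4" by (simp add: field_simps)
      qed
      have ir: "(\<lambda>j. inverse (real (r j))) \<longlonglongrightarrow> 0"
        using LIMSEQ_subseq_LIMSEQ[OF lim_inverse_n r] by (simp add: o_def)
      have "(\<lambda>j. C * s n + D / n + D * n * inverse (real (r j))) \<longlonglongrightarrow> C * s n + D / n + D * n * 0"
        by (intro tendsto_intros ir)
      then have "(\<lambda>j. C * s n + D / n + D * n / r j) \<longlonglongrightarrow> C * s n + D / n + D * n * 0"
        by (simp add: divide_inverse)
      then have lim2: "(\<lambda>j. C * s n + D / n + D * n / r j) \<longlonglongrightarrow> C * s n + D / n" by simp
      have "l \<le> C * s n + D / n"
      proof (rule LIMSEQ_le[OF lim lim2])
        show "\<exists>N. \<forall>j\<ge>N. (s \<circ> r) j \<le> C * s n + D / real n + D * real n / real (r j)"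
        proof (intro exI allI impI)
          fix j :: nat assume "1 \<le> j"
          then have "1 \<le> r j" using rge[of j] by linarith
          then show "(s \<circ> r) j \<le> C * s n + D / real n + D * real n / real (r j)"
            using KD[OF _ n1] by simp
        qed
      qed
      then have "l \<le> C * s n + e / 4" using nD by linarith
      moreover have "(C - 1) * s n \<le> e / 4" using CM bnd[of n] C1 by (meson less_eq_real_def mult_left_mono order.trans diff_gt_0_iff_gt)
      moreover have "C * s n = s n + (C - 1) * s n" by (simp add: algebra_simps)
      ultimately show "s n > a" using e_def e by linarith
    qed
    then show "eventually (\<lambda>n. a < s n) sequentially" unfolding eventually_sequentially by blast
  next
    fix a assume "l < a"
    define e where "e = a - l"
    have e: "e > 0" using \<open>l < a\<close> e_def by simp
    define C where "C = 1 + e / (4 * (M + 1))"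
    have M0: "M \<ge> 0" using bnd[of 0] by linarith
    have C1: "C > 1" using e M0 by (simp add: C_def)
    have CM: "(C - 1) * M \<le> e / 4" using e M0 by (simp add: C_def field_simps)
    obtain D where D: "D \<ge> 0" and KD: "\<And>n m. 1 \<le> n \<Longrightarrow> 1 \<le> m \<Longrightarrow> s n \<le> C * s m + D / m + D * m / n"
      using KI[OF C1] by blast
    obtain J where J: "\<And>j. j \<ge> J \<Longrightarrow> \<bar>(s \<circ> r) j - l\<bar> < e / 4"
      using lim e unfolding LIMSEQ_def dist_real_def by (meson zero_less_divide_iff zero_less_numeral)
    obtain N where N: "real N \<ge> 4 * D / e + 1" by (meson real_arch_simple)
    define m where "m = r (max J N)"
    have mN: "real m \<ge> 4 * D / e + 1" using N rge[of "max J N"] unfolding m_def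
    proof -
      have "N \<le> r (max J N)" using rge[of "max J N"] by linarith
      then have "real N \<le> real (r (max J N))" by simp
      then show "4 * D / e + 1 \<le> real (r (max J N))" using N by linarith
    qed
    have m1: "m \<ge> 1" and mD: "D / m \<le> e / 4"
    proof -
      have "4 * D / e \<ge> 0" using D e by simp
      then show "m \<ge> 1" using mN by linarith
      have "real m > 0" using mN \<open>4 * D / e \<ge> 0\<close> by linarith
      moreover have "4 * D \<le> e * m" using mN e by (simp add: field_simps)
      ultimately show "D / m \<le> e / 4" by (simp add: field_simps)
    qed
    have "\<bar>s m - l\<bar> < e / 4" using J[of "max J N"] unfolding m_def o_def by simp
    then have sm: "s m < l + e / 4" by (simp only: abs_less_iff) linarith
    obtain N2 where N2: "real N2 \<ge> 4 * D * m / e + 1" by (meson real_arch_simple)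
    have "s n < a" if n: "n \<ge> N2" for n
    proof -
      have n1: "n \<ge> 1" and nD: "D * m / n \<le> e / 4"
      proof -
        have "real n \<ge> 4 * D * m / e + 1" using N2 n by linarith
        moreover have "4 * D * m / e \<ge> 0" using D e by simp
        ultimately show "n \<ge> 1" by linarith
        have "real n > 0" using \<open>real n \<ge> 4 * D * m / e + 1\<close> \<open>4 * D * m / e \<ge> 0\<close> by linarith
        moreover have "4 * D * m \<le> e * n" using \<open>real n \<ge> 4 * D * m / e + 1\<close> e by (simp add: field_simps)
        ultimately show "D * m / n \<le> e / 4" by (simp add: field_simps)
      qed
      have "s n \<le> C * s m + D / m + D * m / n" using KD[OF n1 m1] .
      moreover have "(C - 1) * s m \<le> e / 4" using CM bnd[of m] C1 by (meson less_eq_real_def mult_left_mono order.trans diff_gt_0_iff_gt)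
      moreover have "C * s m = s m + (C - 1) * s m" by (simp add: algebra_simps)
      ultimately show ?thesis using sm mD nD e_def by linarith
    qed
    then show "eventually (\<lambda>n. s n < a) sequentially" unfolding eventually_sequentially by blast
  qed
  then show ?thesis by (rule convergentI)
qed

locale P9 =
  fixes smul :: "'k::real_normed_div_algebra \<Rightarrow> 'e::ab_group_add \<Rightarrow> 'e"
    and d :: "'e \<Rightarrow> 'e \<Rightarrow> real"
    and \<mu> :: "'k measure"
  assumes mvs: "metric_vector_space smul d"
    and am: "asymptotically_multiplicative smul d"
    and sumc: "\<forall>C1>1. \<exists>C0\<ge>0. \<forall>n\<ge>2. \<forall>x y :: nat \<Rightarrow> 'e.
                 d (\<Sum>i<n. x i) (\<Sum>i<n. y i) \<le> C1 * (\<Sum>i<n. d (x i) (y i)) + real n * C0"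
    and haar: "haar_prob_unit_sphere \<mu>"
begin

lemma lvs: "left_vector_space smul" using mvs unfolding metric_vector_space_def by blast
lemma sm_add: "smul a (x + y) = smul a x + smul a y" using lvs unfolding left_vector_space_def by blast
lemma sm_ladd: "smul (a + b) x = smul a x + smul b x" using lvs unfolding left_vector_space_def by blast
lemma sm_mult: "smul (a * b) x = smul a (smul b x)" using lvs unfolding left_vector_space_def by blast
lemma sm_one[simp]: "smul 1 x = x" using lvs unfolding left_vector_space_def by blast

lemma sm_zero[simp]: "smul a 0 = 0"
proof -
  have "smul a (0 + 0) = smul a 0 + smul a 0" by (rule sm_add)
  then show ?thesis by simp
qed

lemma sm_zero_left[simp]: "smul 0 x = 0"
proof -
  have "smul (0 + 0) x = smul 0 x + smul 0 x" by (rule sm_ladd)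
  then show ?thesis by simp
qed

lemma sm_minus: "smul a (- x) = - smul a x"
proof -
  have "smul a (x + - x) = smul a x + smul a (- x)" by (rule sm_add)
  then have "smul a x + smul a (- x) = 0" by (simp only: add.right_inverse sm_zero)
  then have "smul a (- x) + smul a x = 0" by (simp only: add.commute)
  then show ?thesis by (simp only: eq_neg_iff_add_eq_0)
qed

lemma sm_lminus: "smul (- a) x = - smul a x"
proof -
  have "smul (a + - a) x = smul a x + smul (- a) x" by (rule sm_ladd)
  then have "smul a x + smul (- a) x = 0" by (simp only: add.right_inverse sm_zero_left)
  then have "smul (- a) x + smul a x = 0" by (simp only: add.commute)
  then show ?thesis by (simp only: eq_neg_iff_add_eq_0)
qed

lemma sm_ldiff: "smul (a - b) x = smul a x - smul b x"
  using sm_ladd[of a "- b" x] sm_lminus[of b x] by (simp only: diff_conv_add_uminus)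

lemma sm_diff: "smul a (x - y) = smul a x - smul a y"
  using sm_add[of a x "- y"] sm_minus[of a y] by (simp only: diff_conv_add_uminus)

lemma sm_sum: "smul a (\<Sum>i\<in>A. f i) = (\<Sum>i\<in>A. smul a (f i))"
  by (induct A rule: infinite_finite_induct) (simp_all add: sm_add)

lemma sm_nat: "smul (of_nat n) x = (\<Sum>i<n. x)"
proof (induct n)
  case 0 then show ?case by simp
next
  case (Suc n)
  have "smul (of_nat (Suc n)) x = smul (1 + of_nat n) x" by (simp only: of_nat_Suc)
  also have "\<dots> = smul 1 x + smul (of_nat n) x" by (rule sm_ladd)
  also have "\<dots> = x + (\<Sum>i<n. x)" by (simp only: sm_one Suc)
  also have "\<dots> = (\<Sum>i<Suc n. x)" by (simp only: sum.lessThan_Suc add.commute)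
  finally show ?case .
qed

lemma sm_nat_comm: "smul (of_nat n) (smul a x) = smul a (smul (of_nat n) x)"
  by (simp only: sm_mult[symmetric] mult_of_nat_commute)

lemma of_real_comm: "of_real t * (a::'k) = a * of_real t"
  by (simp add: of_real_def)

lemma sm_real_comm: "smul (of_real t) (smul a x) = smul a (smul (of_real t) x)"
  by (simp only: sm_mult[symmetric] of_real_comm)

lemma MS: "Metric_space UNIV d" using mvs unfolding metric_vector_space_def by blast
lemma d_nonneg[simp]: "0 \<le> d x y" by (rule Metric_space.nonneg[OF MS])
lemma d_sym: "d x y = d y x" by (rule Metric_space.commute[OF MS])
lemma d_self[simp]: "d x x = 0" using Metric_space.zero[OF MS] by simp
lemma d_tri: "d x z \<le> d x y + d y z" using Metric_space.triangle[OF MS] by simp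

abbreviation "U \<equiv> {u::'k. norm u = 1}"

lemma sets_mu: "sets \<mu> = sets (restrict_space borel U)" using haar unfolding haar_prob_unit_sphere_def by blast
lemma space_mu: "space \<mu> = U" using haar unfolding haar_prob_unit_sphere_def by blast
lemma P: "prob_space \<mu>" using haar unfolding haar_prob_unit_sphere_def by blast
lemma right_inv: "norm v = 1 \<Longrightarrow> A \<in> sets \<mu> \<Longrightarrow> emeasure \<mu> ((\<lambda>u. u * v) ` A) = emeasure \<mu> A"
  using haar unfolding haar_prob_unit_sphere_def by blast

lemma int_const[simp]: "(\<integral>u. c \<partial>\<mu>) = (c::real)"
  using prob_space.prob_space[OF P] by simp

lemma integrable_const_mu[simp]: "integrable \<mu> (\<lambda>u. c::real)"
  by (rule finite_measure.integrable_const[OF prob_space.axioms(1)[OF P]])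

lemma borel_to_mu:
  assumes "f \<in> borel_measurable borel" shows "f \<in> borel_measurable \<mu>"
proof -
  have "f \<in> measurable (restrict_space borel U) borel" by (rule measurable_restrict_space1[OF assms])
  then show ?thesis by (subst measurable_cong_sets[OF sets_mu refl])
qed

lemma cont_smul: "continuous_map euclidean (Metric_space.mtopology UNIV d) (\<lambda>a. smul a x)"
proof -
  have c: "continuous_map (prod_topology euclidean (Metric_space.mtopology UNIV d))
        (Metric_space.mtopology UNIV d) (\<lambda>(a, x). smul a x)"
    using mvs unfolding metric_vector_space_def by blast
  have "continuous_map euclidean (prod_topology euclidean (Metric_space.mtopology UNIV d)) (\<lambda>a. (a, x))"
    by (intro continuous_map_pairedI continuous_map_id continuous_map_const[THEN iffD2])
       (auto simp: Metric_space.topspace_mtopology[OF MS])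
  from continuous_map_compose[OF this c] show ?thesis by (simp add: o_def)
qed

lemma meas_D: "(\<lambda>u. d (smul u x) (smul u y)) \<in> borel_measurable \<mu>"
proof -
  have "continuous_map euclidean euclidean (\<lambda>u. mdist (metric (UNIV, d)) (smul u x) (smul u y))"
    by (intro continuous_map_mdist) (simp_all add: Metric_space.mtopology_of[OF MS] cont_smul)
  then have "continuous_on UNIV (\<lambda>u. d (smul u x) (smul u y))"
    by (simp add: Metric_space.mdist_metric[OF MS])
  then show ?thesis by (intro borel_to_mu borel_measurable_continuous_onI)
qed

lemma am2: "\<exists>K. K \<ge> 0 \<and> (\<forall>(l::'k) x y. d (smul l x) (smul l y) \<le> 2 * norm l * d x y + K * norm l + K)"
proof -
  have "\<exists>C2\<ge>0. \<exists>C3\<ge>0. \<forall>(l::'k) x y. d x y * norm l / 2 - C2 * norm l - C3 \<le> d (smul l x) (smul l y) \<and>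
        d (smul l x) (smul l y) \<le> 2 * norm l * d x y + C2 * norm l + C3"
    using am unfolding asymptotically_multiplicative_def by simp
  then obtain C2 C3 where "C2 \<ge> 0" "C3 \<ge> 0" and h: "\<forall>(l::'k) x y. d (smul l x) (smul l y) \<le> 2 * norm l * d x y + C2 * norm l + C3"
    by blast
  have hK: "\<forall>(l::'k) x y. d (smul l x) (smul l y) \<le> 2 * norm l * d x y + (C2 + C3) * norm l + (C2 + C3)"
  proof (intro allI)
    fix l :: 'k and x y
    have "C2 * norm l \<le> (C2 + C3) * norm l" using \<open>C3 \<ge> 0\<close> by (intro mult_right_mono) simp_all
    then show "d (smul l x) (smul l y) \<le> 2 * norm l * d x y + (C2 + C3) * norm l + (C2 + C3)"
      using h[rule_format, of l x y] \<open>C3 \<ge> 0\<close> \<open>C2 \<ge> 0\<close> by linarith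
  qed
  have pos: "C2 + C3 \<ge> 0" using \<open>C2 \<ge> 0\<close> \<open>C3 \<ge> 0\<close> by simp
  show ?thesis by (intro exI[of _ "C2+C3"] conjI pos hK)
qed

lemma integrable_D[simp]: "integrable \<mu> (\<lambda>u. d (smul u x) (smul u y))"
proof -
  obtain K where K: "K \<ge> 0" "\<forall>(l::'k) x y. d (smul l x) (smul l y) \<le> 2 * norm l * d x y + K * norm l + K"
    using am2 by blast
  have "AE u in \<mu>. norm (d (smul u x) (smul u y)) \<le> 2 * d x y + K + K"
  proof (rule AE_I2)
    fix u assume "u \<in> space \<mu>"
    then have "norm u = 1" using space_mu by simp
    then show "norm (d (smul u x) (smul u y)) \<le> 2 * d x y + K + K" using K(2)[rule_format, of u x y] by simp
  qed
  then show ?thesis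
    by (rule finite_measure.integrable_const_bound[OF prob_space.axioms(1)[OF P] _ meas_D])
qed


lemma mult_meas: assumes v: "norm v = 1" shows "(\<lambda>u. u * v) \<in> measurable \<mu> \<mu>"
proof -
  have c: "(\<lambda>u::'k. u * v) \<in> borel_measurable borel"
    by (intro borel_measurable_continuous_onI continuous_intros)
  have "(\<lambda>u. u * v) \<in> U \<rightarrow> U" using v by (auto simp: norm_mult)
  then have "(\<lambda>u. u * v) \<in> measurable (restrict_space borel U) (restrict_space borel U)"
    by (rule measurable_restrict_space3[OF c])
  then show ?thesis by (subst measurable_cong_sets[OF sets_mu sets_mu])
qed

lemma distr_mult: assumes v: "norm v = 1" shows "distr \<mu> \<mu> (\<lambda>u. u * v) = \<mu>"
proof (rule measure_eqI)
  show "sets (distr \<mu> \<mu> (\<lambda>u. u * v)) = sets \<mu>" by (rule sets_distr)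
next
  fix A assume "A \<in> sets (distr \<mu> \<mu> (\<lambda>u. u * v))"
  then have A: "A \<in> sets \<mu>" by (simp only: sets_distr)
  then have AU: "A \<subseteq> U" using sets.sets_into_space space_mu by blast
  have v0: "v \<noteq> 0" using v by auto
  have eq: "(\<lambda>u. u * v) -` A \<inter> space \<mu> = (\<lambda>u. u * inverse v) ` A"
  proof
    show "(\<lambda>u. u * v) -` A \<inter> space \<mu> \<subseteq> (\<lambda>u. u * inverse v) ` A"
    proof
      fix u assume "u \<in> (\<lambda>u. u * v) -` A \<inter> space \<mu>"
      then have "u * v \<in> A" by simp
      moreover have "u = (u * v) * inverse v" using v0 by (simp add: mult.assoc)
      ultimately show "u \<in> (\<lambda>u. u * inverse v) ` A" by blast
    qed
  next
    show "(\<lambda>u. u * inverse v) ` A \<subseteq> (\<lambda>u. u * v) -` A \<inter> space \<mu>"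
    proof
      fix u assume "u \<in> (\<lambda>u. u * inverse v) ` A"
      then obtain w where w: "w \<in> A" "u = w * inverse v" by blast
      have "u * v = w" using v0 w(2) by (simp add: mult.assoc)
      moreover have "norm u = 1" using w AU v by (auto simp: norm_mult norm_inverse)
      ultimately show "u \<in> (\<lambda>u. u * v) -` A \<inter> space \<mu>" using w(1) space_mu by simp
    qed
  qed
  have nv: "norm (inverse v) = 1" using v by (simp add: norm_inverse)
  have "emeasure (distr \<mu> \<mu> (\<lambda>u. u * v)) A = emeasure \<mu> ((\<lambda>u. u * v) -` A \<inter> space \<mu>)"
    by (rule emeasure_distr[OF mult_meas[OF v] A])
  also have "\<dots> = emeasure \<mu> ((\<lambda>u. u * inverse v) ` A)" by (simp only: eq)
  also have "\<dots> = emeasure \<mu> A" by (rule right_inv[OF nv A])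
  finally show "emeasure (distr \<mu> \<mu> (\<lambda>u. u * v)) A = emeasure \<mu> A" .
qed

lemma haar_int:
  fixes f :: "'k \<Rightarrow> real"
  assumes v: "norm v = 1" and f: "f \<in> borel_measurable \<mu>"
  shows "(\<integral>u. f (u * v) \<partial>\<mu>) = (\<integral>u. f u \<partial>\<mu>)"
proof -
  have "(\<integral>u. f u \<partial>\<mu>) = (\<integral>u. f u \<partial>(distr \<mu> \<mu> (\<lambda>u. u * v)))" by (simp only: distr_mult[OF v])
  also have "\<dots> = (\<integral>u. f (u * v) \<partial>\<mu>)" by (rule integral_distr[OF mult_meas[OF v] f])
  finally show ?thesis by (rule sym)
qed

abbreviation "D \<equiv> d0 \<mu> smul d"

lemma D_eq: "D x y = (\<integral>u. d (smul u x) (smul u y) \<partial>\<mu>)" unfolding d0_def by (rule refl)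

lemma D_nonneg[simp]: "0 \<le> D x y" unfolding d0_def by (rule Bochner_Integration.integral_nonneg) (rule d_nonneg)

lemma D_self[simp]: "D x x = 0" unfolding d0_def by (simp only: d_self integral_zero)

lemma D_sym: "D x y = D y x" unfolding d0_def by (subst d_sym) (rule refl)

lemma D_tri: "D x z \<le> D x y + D y z"
proof -
  have "D x z \<le> (\<integral>u. d (smul u x) (smul u y) + d (smul u y) (smul u z) \<partial>\<mu>)"
    unfolding d0_def by (rule Bochner_Integration.integral_mono[OF integrable_D Bochner_Integration.integrable_add[OF integrable_D integrable_D]]) (rule d_tri)
  also have "\<dots> = D x y + D y z" unfolding d0_def by (rule Bochner_Integration.integral_add[OF integrable_D integrable_D])
  finally show ?thesis .
qed

lemma D_unit: assumes v: "norm v = 1" shows "D (smul v x) (smul v y) = D x y"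
proof -
  have "D (smul v x) (smul v y) = (\<integral>u. (\<lambda>w. d (smul w x) (smul w y)) (u * v) \<partial>\<mu>)"
    unfolding d0_def by (simp only: sm_mult)
  also have "\<dots> = D x y" unfolding d0_def by (rule haar_int[OF v meas_D])
  finally show ?thesis .
qed

lemma int_affine: "(\<integral>u. a * d (smul u x) (smul u y) + b \<partial>\<mu>) = a * D x y + b"
proof -
  have "(\<integral>u. a * d (smul u x) (smul u y) + b \<partial>\<mu>) = (\<integral>u. a * d (smul u x) (smul u y) \<partial>\<mu>) + (\<integral>u. b \<partial>\<mu>)"
    by (rule Bochner_Integration.integral_add[OF Bochner_Integration.integrable_mult_right[OF integrable_D] integrable_const_mu])
  also have "\<dots> = a * D x y + b" unfolding d0_def by (simp only: Bochner_Integration.integral_mult_right_zero int_const)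
  finally show ?thesis .
qed

lemma int_sandwich:
  assumes h: "\<And>u. norm u = 1 \<Longrightarrow> a1 * d (smul u x) (smul u y) + b1 \<le> d (smul u x') (smul u y') \<and>
      d (smul u x') (smul u y') \<le> a2 * d (smul u x) (smul u y) + b2"
  shows "a1 * D x y + b1 \<le> D x' y' \<and> D x' y' \<le> a2 * D x y + b2"
proof
  have "(\<integral>u. a1 * d (smul u x) (smul u y) + b1 \<partial>\<mu>) \<le> D x' y'"
    unfolding d0_def
    by (rule Bochner_Integration.integral_mono[OF Bochner_Integration.integrable_add[OF Bochner_Integration.integrable_mult_right[OF integrable_D] integrable_const_mu] integrable_D])
       (use h space_mu in blast)
  then show "a1 * D x y + b1 \<le> D x' y'" by (simp only: int_affine)
  have "D x' y' \<le> (\<integral>u. a2 * d (smul u x) (smul u y) + b2 \<partial>\<mu>)"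
    unfolding d0_def
    by (rule Bochner_Integration.integral_mono[OF integrable_D Bochner_Integration.integrable_add[OF Bochner_Integration.integrable_mult_right[OF integrable_D] integrable_const_mu]])
       (use h space_mu in blast)
  then show "D x' y' \<le> a2 * D x y + b2" by (simp only: int_affine)
qed


lemma D_sum:
  assumes C1: "C1 > 1"
  shows "\<exists>C0\<ge>0. \<forall>n\<ge>2. \<forall>p q :: nat \<Rightarrow> 'e.
           D (\<Sum>i<n. p i) (\<Sum>i<n. q i) \<le> C1 * (\<Sum>i<n. D (p i) (q i)) + real n * C0"
proof -
  obtain C0 where C0: "C0 \<ge> 0" and h: "\<forall>n\<ge>2. \<forall>x y :: nat \<Rightarrow> 'e.
                 d (\<Sum>i<n. x i) (\<Sum>i<n. y i) \<le> C1 * (\<Sum>i<n. d (x i) (y i)) + real n * C0"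
    using sumc C1 by blast
  have "\<forall>n\<ge>2. \<forall>p q :: nat \<Rightarrow> 'e.
           D (\<Sum>i<n. p i) (\<Sum>i<n. q i) \<le> C1 * (\<Sum>i<n. D (p i) (q i)) + real n * C0"
  proof (intro allI impI)
    fix n :: nat and p q :: "nat \<Rightarrow> 'e" assume n: "n \<ge> 2"
    have int1: "integrable \<mu> (\<lambda>u. C1 * (\<Sum>i<n. d (smul u (p i)) (smul u (q i))) + real n * C0)"
      by (intro Bochner_Integration.integrable_add Bochner_Integration.integrable_mult_right Bochner_Integration.integrable_sum integrable_D integrable_const_mu)
    have "D (\<Sum>i<n. p i) (\<Sum>i<n. q i) \<le> (\<integral>u. C1 * (\<Sum>i<n. d (smul u (p i)) (smul u (q i))) + real n * C0 \<partial>\<mu>)"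
      unfolding d0_def
    proof (rule Bochner_Integration.integral_mono[OF integrable_D int1])
      fix u
      have "d (smul u (\<Sum>i<n. p i)) (smul u (\<Sum>i<n. q i)) = d (\<Sum>i<n. smul u (p i)) (\<Sum>i<n. smul u (q i))"
        by (simp only: sm_sum)
      also have "\<dots> \<le> C1 * (\<Sum>i<n. d (smul u (p i)) (smul u (q i))) + real n * C0"
        using h n by blast
      finally show "d (smul u (\<Sum>i<n. p i)) (smul u (\<Sum>i<n. q i)) \<le> C1 * (\<Sum>i<n. d (smul u (p i)) (smul u (q i))) + real n * C0" .
    qed
    also have "\<dots> = (\<integral>u. C1 * (\<Sum>i<n. d (smul u (p i)) (smul u (q i))) \<partial>\<mu>) + (\<integral>u. real n * C0 \<partial>\<mu>)"
      by (intro Bochner_Integration.integral_add Bochner_Integration.integrable_mult_right Bochner_Integration.integrable_sum integrable_D integrable_const_mu)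
    also have "\<dots> = C1 * (\<integral>u. (\<Sum>i<n. d (smul u (p i)) (smul u (q i))) \<partial>\<mu>) + real n * C0"
      by (simp only: Bochner_Integration.integral_mult_right_zero int_const)
    also have "(\<integral>u. (\<Sum>i<n. d (smul u (p i)) (smul u (q i))) \<partial>\<mu>) = (\<Sum>i<n. D (p i) (q i))"
      unfolding d0_def by (rule Bochner_Integration.integral_sum) (rule integrable_D)
    finally show "D (\<Sum>i<n. p i) (\<Sum>i<n. q i) \<le> C1 * (\<Sum>i<n. D (p i) (q i)) + real n * C0" .
  qed
  then show ?thesis using C0 by blast
qed

lemma sum2: "(\<Sum>i<(2::nat). f i) = f 0 + f 1"
  by (simp add: numeral_2_eq_2)

lemma D_add2:
  assumes C1: "C1 > 1"
  shows "\<exists>C0\<ge>0. \<forall>a a' b b'. D (a + a') (b + b') \<le> C1 * (D a b + D a' b') + 2 * C0"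
proof -
  obtain C0 where C0: "C0 \<ge> 0" and h: "\<forall>n\<ge>2. \<forall>p q :: nat \<Rightarrow> 'e.
           D (\<Sum>i<n. p i) (\<Sum>i<n. q i) \<le> C1 * (\<Sum>i<n. D (p i) (q i)) + real n * C0"
    using D_sum[OF C1] by blast
  have "\<forall>a a' b b'. D (a + a') (b + b') \<le> C1 * (D a b + D a' b') + 2 * C0"
  proof (intro allI)
    fix a a' b b' :: 'e
    have "D (\<Sum>i<(2::nat). (\<lambda>i. if i = 0 then a else a') i) (\<Sum>i<(2::nat). (\<lambda>i. if i = 0 then b else b') i)
       \<le> C1 * (\<Sum>i<(2::nat). D ((\<lambda>i. if i = 0 then a else a') i) ((\<lambda>i. if i = 0 then b else b') i)) + real 2 * C0"
      using h by blast
    then show "D (a + a') (b + b') \<le> C1 * (D a b + D a' b') + 2 * C0" by (simp only: sum2) simp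
  qed
  then show ?thesis using C0 by blast
qed

lemma D_nat_mul:
  assumes C1: "C1 > 1"
  shows "\<exists>C0\<ge>0. \<forall>k x y. D (smul (of_nat k) x) (smul (of_nat k) y) \<le> C1 * real k * D x y + real k * C0"
proof -
  obtain C0 where C0: "C0 \<ge> 0" and h: "\<forall>n\<ge>2. \<forall>p q :: nat \<Rightarrow> 'e.
           D (\<Sum>i<n. p i) (\<Sum>i<n. q i) \<le> C1 * (\<Sum>i<n. D (p i) (q i)) + real n * C0"
    using D_sum[OF C1] by blast
  have "\<forall>k x y. D (smul (of_nat k) x) (smul (of_nat k) y) \<le> C1 * real k * D x y + real k * C0"
  proof (intro allI)
    fix k :: nat and x y :: 'e
    show "D (smul (of_nat k) x) (smul (of_nat k) y) \<le> C1 * real k * D x y + real k * C0"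
    proof (cases "k \<ge> 2")
      case True
      have "D (\<Sum>i<k. (\<lambda>i. x) i) (\<Sum>i<k. (\<lambda>i. y) i) \<le> C1 * (\<Sum>i<k. D ((\<lambda>i. x) i) ((\<lambda>i. y) i)) + real k * C0"
        using h True by blast
      then show ?thesis by (simp add: sm_nat)
    next
      case False
      then have "k = 0 \<or> k = 1" by auto
      then show ?thesis
      proof
        assume "k = 0" then show ?thesis by simp
      next
        assume k: "k = 1"
        have "1 * D x y \<le> C1 * D x y" by (rule mult_right_mono) (use C1 in auto)
        then have "D x y \<le> C1 * D x y" by simp
        then show ?thesis using k C0 by simp
      qed
    qed
  qed
  then show ?thesis using C0 by blast
qed

lemma D_vs_d:
  assumes C1: "C1 > 1"
  shows "\<exists>B\<ge>0. \<forall>x y. d x y / C1 - B \<le> D x y \<and> D x y \<le> C1 * d x y + B"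
proof -
  obtain C2 C3 where C2: "C2 \<ge> 0" and C3: "C3 \<ge> 0" and h: "\<forall>(l::'k) x y.
        d x y * norm l / C1 - C2 * norm l - C3 \<le> d (smul l x) (smul l y) \<and>
        d (smul l x) (smul l y) \<le> C1 * norm l * d x y + C2 * norm l + C3"
    using am C1 unfolding asymptotically_multiplicative_def by blast
  have "\<forall>x y. d x y / C1 - (C2 + C3) \<le> D x y \<and> D x y \<le> C1 * d x y + (C2 + C3)"
  proof (intro allI)
    fix x y :: 'e
    have "0 * D 0 0 + (d x y / C1 - (C2 + C3)) \<le> D x y \<and> D x y \<le> 0 * D 0 0 + (C1 * d x y + (C2 + C3))"
    proof (rule int_sandwich)
      fix u :: 'k assume u: "norm u = 1"
      have "d x y * norm u / C1 - C2 * norm u - C3 \<le> d (smul u x) (smul u y) \<and>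
        d (smul u x) (smul u y) \<le> C1 * norm u * d x y + C2 * norm u + C3" using h by blast
      then show "0 * d (smul u 0) (smul u 0) + (d x y / C1 - (C2 + C3)) \<le> d (smul u x) (smul u y) \<and>
          d (smul u x) (smul u y) \<le> 0 * d (smul u 0) (smul u 0) + (C1 * d x y + (C2 + C3))"
        using u by simp
    qed
    then show "d x y / C1 - (C2 + C3) \<le> D x y \<and> D x y \<le> C1 * d x y + (C2 + C3)" by simp
  qed
  moreover have "C2 + C3 \<ge> 0" using C2 C3 by simp
  ultimately show ?thesis by blast
qed

lemma D_real_scale:
  assumes C1: "C1 > 1"
  shows "\<exists>C2\<ge>0. \<exists>C3\<ge>0. \<forall>t x y. t \<ge> 0 \<longrightarrow>
     t * D x y / C1 - C2 * t - C3 \<le> D (smul (of_real t) x) (smul (of_real t) y) \<and>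
     D (smul (of_real t) x) (smul (of_real t) y) \<le> C1 * t * D x y + C2 * t + C3"
proof -
  obtain C2 C3 where C2: "C2 \<ge> 0" and C3: "C3 \<ge> 0" and h: "\<forall>(l::'k) x y.
        d x y * norm l / C1 - C2 * norm l - C3 \<le> d (smul l x) (smul l y) \<and>
        d (smul l x) (smul l y) \<le> C1 * norm l * d x y + C2 * norm l + C3"
    using am C1 unfolding asymptotically_multiplicative_def by blast
  have "\<forall>t x y. t \<ge> 0 \<longrightarrow>
     t * D x y / C1 - C2 * t - C3 \<le> D (smul (of_real t) x) (smul (of_real t) y) \<and>
     D (smul (of_real t) x) (smul (of_real t) y) \<le> C1 * t * D x y + C2 * t + C3"
  proof (intro allI impI)
    fix t :: real and x y :: 'e assume t: "t \<ge> 0"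
    have "(t / C1) * D x y + (- C2 * t - C3) \<le> D (smul (of_real t) x) (smul (of_real t) y) \<and>
          D (smul (of_real t) x) (smul (of_real t) y) \<le> (C1 * t) * D x y + (C2 * t + C3)"
    proof (rule int_sandwich)
      fix u :: 'k assume u: "norm u = 1"
      have nt: "norm (of_real t :: 'k) = t" using t by simp
      have e: "d (smul u (smul (of_real t) x)) (smul u (smul (of_real t) y)) =
            d (smul (of_real t) (smul u x)) (smul (of_real t) (smul u y))" by (simp only: sm_real_comm)
      have "d (smul u x) (smul u y) * norm (of_real t :: 'k) / C1 - C2 * norm (of_real t :: 'k) - C3 \<le> d (smul (of_real t) (smul u x)) (smul (of_real t) (smul u y)) \<and>
        d (smul (of_real t) (smul u x)) (smul (of_real t) (smul u y)) \<le> C1 * norm (of_real t :: 'k) * d (smul u x) (smul u y) + C2 * norm (of_real t :: 'k) + C3"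
        using h by blast
      then show "t / C1 * d (smul u x) (smul u y) + (- C2 * t - C3) \<le> d (smul u (smul (of_real t) x)) (smul u (smul (of_real t) y)) \<and>
          d (smul u (smul (of_real t) x)) (smul u (smul (of_real t) y)) \<le> C1 * t * d (smul u x) (smul u y) + (C2 * t + C3)"
        unfolding e nt by (simp add: algebra_simps)
    qed
    then show "t * D x y / C1 - C2 * t - C3 \<le> D (smul (of_real t) x) (smul (of_real t) y) \<and>
     D (smul (of_real t) x) (smul (of_real t) y) \<le> C1 * t * D x y + C2 * t + C3" by (simp add: algebra_simps)
  qed
  then show ?thesis using C2 C3 by blast
qed

end

lemma conv_b:
  fixes b :: "nat \<Rightarrow> real"
  assumes nn: "\<And>n. 0 \<le> b n" and b0: "b 0 = 0"
    and H: "\<And>C. C > 1 \<Longrightarrow> \<exists>C0\<ge>0. (\<forall>s t. b (s + t) \<le> C * (b s + b t) + C0) \<and>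
                              (\<forall>k m. b (k * m) \<le> C * real k * b m + real k * C0)"
  shows "convergent (\<lambda>n. b n / real n)"
proof -
  obtain C0 where C0: "C0 \<ge> 0" and hm: "\<forall>k m. b (k * m) \<le> 2 * real k * b m + real k * C0"
    using H[of 2] by auto
  show ?thesis
  proof (rule approx_fekete[where M = "2 * b 1 + C0"])
  show "0 \<le> b n / real n \<and> b n / real n \<le> 2 * b 1 + C0" for n
  proof
    show "0 \<le> b n / real n" using nn[of n] by simp
    show "b n / real n \<le> 2 * b 1 + C0"
    proof (cases "n = 0")
      case True then show ?thesis using nn[of 1] C0 by simp
    next
      case False
      have "b (n * 1) \<le> 2 * real n * b 1 + real n * C0" using hm by blast
      then have "b n \<le> real n * (2 * b 1 + C0)" by (simp add: algebra_simps)
      then show ?thesis using False by (simp add: divide_le_eq mult.commute)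
    qed
  qed
next
  fix C :: real assume C: "C > 1"
  define c where "c = sqrt C"
  have c1: "c > 1" using C unfolding c_def by simp
  have cc: "c * c = C" using C unfolding c_def by simp
  obtain C0 where C0: "C0 \<ge> 0" and ha: "\<forall>s t. b (s + t) \<le> c * (b s + b t) + C0"
      and hm: "\<forall>k m. b (k * m) \<le> c * real k * b m + real k * C0"
    using H[OF c1] by blast
  define D where "D = c * C0 + c * (c * b 1 + C0) + C0"
  have b1: "b 1 \<ge> 0" using nn by simp
  have Dc1: "c * C0 \<le> D" and Dc2: "c * (c * b 1 + C0) + C0 \<le> D"
    using C0 c1 b1 unfolding D_def by (simp_all add: add_nonneg_nonneg)
  have D0: "D \<ge> 0" using C0 c1 b1 unfolding D_def by (simp add: add_nonneg_nonneg)
  have "\<forall>n m. 1 \<le> n \<longrightarrow> 1 \<le> m \<longrightarrow> b n / real n \<le> C * (b m / real m) + D / real m + D * real m / real n"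
  proof (intro allI impI)
    fix n m :: nat assume n: "1 \<le> n" and m: "1 \<le> m"
    define k where "k = n div m"
    define r where "r = n mod m"
    have nkr: "n = k * m + r" unfolding k_def r_def by simp
    have rm: "r \<le> m" unfolding r_def using m by (simp add: less_imp_le)
    have km: "real k * real m \<le> real n" using nkr by (simp flip: of_nat_mult)
    have rmr: "real r \<le> real m" using rm by simp
    have mpos: "real m \<ge> 1" "real n \<ge> 1" using m n by simp_all
    have s1: "b n \<le> c * (b (k * m) + b r) + C0" using ha nkr by metis
    have s2: "b (k * m) \<le> c * real k * b m + real k * C0" using hm by blast
    have s3: "b (r * 1) \<le> c * real r * b 1 + real r * C0" using hm by blast
    have bn: "b n \<le> C * real k * b m + c * real k * C0 + c * (c * b 1 + C0) * real r + C0"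
    proof -
      have "b n \<le> c * (c * real k * b m + real k * C0 + (c * real r * b 1 + real r * C0)) + C0"
        using s1 s2 s3 c1 by (smt (verit) mult_left_mono mult_1_right)
      then show ?thesis unfolding cc[symmetric] by (simp add: algebra_simps)
    qed
    have t1: "C * b m * (real k * real m) \<le> C * b m * real n"
      by (rule mult_left_mono[OF km]) (use C nn[of m] in simp)
    have t2: "c * C0 * (real k * real m) \<le> c * C0 * real n"
      by (rule mult_left_mono[OF km]) (use c1 C0 in simp)
    have t3: "c * (c * b 1 + C0) * (real r * real m) \<le> c * (c * b 1 + C0) * (real m * real m)"
      using rmr c1 C0 b1 by (intro mult_left_mono mult_right_mono) simp_all
    have t4: "C0 * real m \<le> C0 * (real m * real m)" using mpos C0 by (simp add: mult_left_mono)
    have t5: "c * C0 * real n \<le> D * real n" using Dc1 mpos by (simp add: mult_right_mono)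
    have t6': "(c * (c * b 1 + C0) + C0) * (real m * real m) \<le> D * (real m * real m)"
      using Dc2 by (simp add: mult_right_mono)
    have t6: "c * (c * b 1 + C0) * (real m * real m) + C0 * (real m * real m) \<le> D * (real m * real m)"
      using t6' by (simp only: distrib_right)
    have "b n * real m \<le> (C * real k * b m + c * real k * C0 + c * (c * b 1 + C0) * real r + C0) * real m"
      using bn mpos by (simp add: mult_right_mono)
    also have "\<dots> = C * b m * (real k * real m) + c * C0 * (real k * real m) + c * (c * b 1 + C0) * (real r * real m) + C0 * real m"
      by (simp add: algebra_simps)
    also have "\<dots> \<le> C * b m * real n + D * real n + D * (real m * real m)"
      using t1 t2 t3 t4 t5 t6 by linarith
    finally have main: "b n * real m \<le> C * b m * real n + D * real n + D * (real m * real m)" .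
    have "b n / real n = (b n * real m) / (real n * real m)" using mpos by simp
    also have "\<dots> \<le> (C * b m * real n + D * real n + D * (real m * real m)) / (real n * real m)"
      using main mpos by (intro divide_right_mono) simp_all
    also have "\<dots> = C * (b m / real m) + D / real m + D * real m / real n"
      using mpos by (simp add: field_simps)
    finally show "b n / real n \<le> C * (b m / real m) + D / real m + D * real m / real n" .
  qed
  then show "\<exists>D\<ge>0. \<forall>n m. 1 \<le> n \<longrightarrow> 1 \<le> m \<longrightarrow> b n / real n \<le> C * (b m / real m) + D / real m + D * real m / real n"
    using D0 by blast
qed
qed

lemma lim_le:
  fixes X Y :: "nat \<Rightarrow> real"
  assumes X: "X \<longlonglongrightarrow> a" and Y: "Y \<longlonglongrightarrow> b" and h: "\<And>n. n \<ge> 1 \<Longrightarrow> X n \<le> c * Y n + e / real n + f"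
  shows "a \<le> c * b + f"
proof -
  have "(\<lambda>n. c * Y n + e * inverse (real n) + f) \<longlonglongrightarrow> c * b + e * 0 + f"
    by (intro tendsto_intros Y lim_inverse_n)
  then have l: "(\<lambda>n. c * Y n + e / real n + f) \<longlonglongrightarrow> c * b + f" by (simp add: divide_inverse)
  show ?thesis by (rule LIMSEQ_le[OF X l]) (use h in auto)
qed

lemma lim_ge:
  fixes X Y :: "nat \<Rightarrow> real"
  assumes X: "X \<longlonglongrightarrow> a" and Y: "Y \<longlonglongrightarrow> b" and h: "\<And>n. n \<ge> 1 \<Longrightarrow> c * Y n - e / real n - f \<le> X n"
  shows "c * b - f \<le> a"
proof -
  have "(\<lambda>n. c * Y n - e * inverse (real n) - f) \<longlonglongrightarrow> c * b - e * 0 - f"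
    by (intro tendsto_intros Y lim_inverse_n)
  then have l: "(\<lambda>n. c * Y n - e / real n - f) \<longlonglongrightarrow> c * b - f" by (simp add: divide_inverse)
  show ?thesis by (rule LIMSEQ_le[OF l X]) (use h in auto)
qed

lemma le_all_C:
  fixes a b :: real
  assumes h: "\<And>C. C > 1 \<Longrightarrow> a \<le> C * b"
  shows "a \<le> b"
proof -
  have "(\<lambda>n. (1 + inverse (real (Suc n))) * b) \<longlonglongrightarrow> (1 + 0) * b"
    by (intro tendsto_intros LIMSEQ_inverse_real_of_nat)
  then have l: "(\<lambda>n. (1 + inverse (real (Suc n))) * b) \<longlonglongrightarrow> b" by simp
  show ?thesis
  proof (rule LIMSEQ_le_const[OF l], intro exI allI impI)
    fix n :: nat
    have "1 + inverse (real (Suc n)) > 1" by simp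
    then show "a \<le> (1 + inverse (real (Suc n))) * b" by (rule h)
  qed
qed

context P9 begin

abbreviation "\<delta> \<equiv> delta0 \<mu> smul d"

lemma seq_conv: "convergent (\<lambda>n. D (smul (of_nat n) x) (smul (of_nat n) y) / real n)"
proof (rule conv_b)
  show "\<And>n. 0 \<le> D (smul (of_nat n) x) (smul (of_nat n) y)" by simp
  show "D (smul (of_nat 0) x) (smul (of_nat 0) y) = 0" by simp
next
  fix C :: real assume C: "C > 1"
  obtain C0a where C0a: "C0a \<ge> 0" and ha: "\<forall>a a' b b'. D (a + a') (b + b') \<le> C * (D a b + D a' b') + 2 * C0a"
    using D_add2[OF C] by blast
  obtain C0b where C0b: "C0b \<ge> 0" and hm: "\<forall>k x y. D (smul (of_nat k) x) (smul (of_nat k) y) \<le> C * real k * D x y + real k * C0b"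
    using D_nat_mul[OF C] by blast
  have A: "D (smul (of_nat (s + t)) x) (smul (of_nat (s + t)) y) \<le>
      C * (D (smul (of_nat s) x) (smul (of_nat s) y) + D (smul (of_nat t) x) (smul (of_nat t) y)) + (2 * C0a + C0b)" for s t
  proof -
    have "D (smul (of_nat (s + t)) x) (smul (of_nat (s + t)) y) =
          D (smul (of_nat s) x + smul (of_nat t) x) (smul (of_nat s) y + smul (of_nat t) y)"
      by (simp only: of_nat_add sm_ladd)
    also have "\<dots> \<le> C * (D (smul (of_nat s) x) (smul (of_nat s) y) + D (smul (of_nat t) x) (smul (of_nat t) y)) + 2 * C0a"
      using ha by blast
    finally show ?thesis using C0b by linarith
  qed
  have M: "D (smul (of_nat (k * m)) x) (smul (of_nat (k * m)) y) \<le>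
      C * real k * D (smul (of_nat m) x) (smul (of_nat m) y) + real k * (2 * C0a + C0b)" for k m
  proof -
    have "D (smul (of_nat (k * m)) x) (smul (of_nat (k * m)) y) =
          D (smul (of_nat k) (smul (of_nat m) x)) (smul (of_nat k) (smul (of_nat m) y))"
      by (simp only: of_nat_mult sm_mult)
    also have "\<dots> \<le> C * real k * D (smul (of_nat m) x) (smul (of_nat m) y) + real k * C0b"
      using hm by blast
    also have "real k * C0b \<le> real k * (2 * C0a + C0b)" using C0a by (simp add: mult_left_mono)
    finally show ?thesis by simp
  qed
  show "\<exists>C0\<ge>0. (\<forall>s t. D (smul (of_nat (s + t)) x) (smul (of_nat (s + t)) y) \<le>
      C * (D (smul (of_nat s) x) (smul (of_nat s) y) + D (smul (of_nat t) x) (smul (of_nat t) y)) + C0) \<and>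
      (\<forall>k m. D (smul (of_nat (k * m)) x) (smul (of_nat (k * m)) y) \<le>
      C * real k * D (smul (of_nat m) x) (smul (of_nat m) y) + real k * C0)"
    using A M C0a C0b by (intro exI[of _ "2 * C0a + C0b"]) auto
qed

lemma seq_lim: "(\<lambda>n. D (smul (of_nat n) x) (smul (of_nat n) y) / real n) \<longlonglongrightarrow> \<delta> x y"
  unfolding delta0_def by (rule convergent_LIMSEQ_iff[THEN iffD1, OF seq_conv])

lemma delta_nonneg: "0 \<le> \<delta> x y"
  by (rule LIMSEQ_le_const[OF seq_lim]) simp

lemma delta_self: "\<delta> x x = 0"
proof -
  have "(\<lambda>n. D (smul (of_nat n) x) (smul (of_nat n) x) / real n) = (\<lambda>n. 0)" by simp
  then have "(\<lambda>n. 0) \<longlonglongrightarrow> \<delta> x x" using seq_lim[of x x] by simp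
  then show ?thesis using LIMSEQ_unique tendsto_const by blast
qed

lemma delta_sym: "\<delta> x y = \<delta> y x"
  unfolding delta0_def by (subst D_sym) (rule refl)

lemma delta_tri: "\<delta> x z \<le> \<delta> x y + \<delta> y z"
proof -
  have "\<delta> x z \<le> 1 * (\<delta> x y + \<delta> y z) + 0"
  proof (rule lim_le[OF seq_lim tendsto_add[OF seq_lim seq_lim], where e = 0])
    fix n :: nat
    have "D (smul (of_nat n) x) (smul (of_nat n) z) \<le> D (smul (of_nat n) x) (smul (of_nat n) y) + D (smul (of_nat n) y) (smul (of_nat n) z)"
      by (rule D_tri)
    then show "D (smul (of_nat n) x) (smul (of_nat n) z) / real n \<le>
      1 * (D (smul (of_nat n) x) (smul (of_nat n) y) / real n + D (smul (of_nat n) y) (smul (of_nat n) z) / real n) + 0 / real n + 0"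
      by (simp add: divide_right_mono add_divide_distrib[symmetric])
  qed
  then show ?thesis by simp
qed


lemma delta_up:
  assumes C: "C > 1"
  shows "\<exists>B\<ge>0. \<forall>x y. \<delta> x y \<le> C * D x y + B"
proof -
  obtain C0 where C0: "C0 \<ge> 0" and hm: "\<forall>k x y. D (smul (of_nat k) x) (smul (of_nat k) y) \<le> C * real k * D x y + real k * C0"
    using D_nat_mul[OF C] by blast
  have "\<delta> x y \<le> C * D x y + C0" for x y
  proof (rule LIMSEQ_le_const2[OF seq_lim], intro exI allI impI)
    fix n :: nat assume n: "n \<ge> 1"
    have "D (smul (of_nat n) x) (smul (of_nat n) y) \<le> real n * (C * D x y + C0)"
      using hm by (simp add: algebra_simps)
    then show "D (smul (of_nat n) x) (smul (of_nat n) y) / real n \<le> C * D x y + C0"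
      using n by (simp add: divide_le_eq mult.commute)
  qed
  then show ?thesis using C0 by blast
qed

lemma delta_low:
  assumes C: "C > 1"
  shows "\<exists>B\<ge>0. \<forall>x y. D x y / C - B \<le> \<delta> x y"
proof -
  obtain C2 C3 where C2: "C2 \<ge> 0" and C3: "C3 \<ge> 0" and h: "\<forall>t x y. t \<ge> 0 \<longrightarrow>
     t * D x y / C - C2 * t - C3 \<le> D (smul (of_real t) x) (smul (of_real t) y) \<and>
     D (smul (of_real t) x) (smul (of_real t) y) \<le> C * t * D x y + C2 * t + C3"
    using D_real_scale[OF C] by blast
  have "(1 / C) * D x y - C2 \<le> \<delta> x y" for x y
  proof -
    have "(1 / C) * (\<lambda>n. D x y) 0 - C2 \<le> \<delta> x y"
    proof (rule lim_ge[OF seq_lim tendsto_const, where e = C3])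
      fix n :: nat assume n: "n \<ge> 1"
      have "real n * D x y / C - C2 * real n - C3 \<le> D (smul (of_nat n) x) (smul (of_nat n) y)"
        using h[rule_format, of "real n" x y] by simp
      then have "(real n * D x y / C - C2 * real n - C3) / real n \<le> D (smul (of_nat n) x) (smul (of_nat n) y) / real n"
        using n by (simp add: divide_right_mono)
      moreover have "(real n * D x y / C - C2 * real n - C3) / real n = 1 / C * D x y - C3 / real n - C2"
        using n by (simp add: field_simps)
      ultimately show "1 / C * D x y - C3 / real n - C2 \<le> D (smul (of_nat n) x) (smul (of_nat n) y) / real n"
        by simp
    qed
    then show ?thesis by simp
  qed
  then show ?thesis using C2 by (intro exI[of _ C2]) auto
qed

lemma delta_transl_le: "\<delta> (x + z) (y + z) \<le> \<delta> x y"
proof (rule le_all_C)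
  fix C :: real assume C: "C > 1"
  obtain C0 where C0: "C0 \<ge> 0" and ha: "\<forall>a a' b b'. D (a + a') (b + b') \<le> C * (D a b + D a' b') + 2 * C0"
    using D_add2[OF C] by blast
  have "\<delta> (x + z) (y + z) \<le> C * \<delta> x y + 0"
  proof (rule lim_le[OF seq_lim seq_lim, where e = "2 * C0"])
    fix n :: nat assume n: "n \<ge> 1"
    have "D (smul (of_nat n) (x + z)) (smul (of_nat n) (y + z)) =
      D (smul (of_nat n) x + smul (of_nat n) z) (smul (of_nat n) y + smul (of_nat n) z)" by (simp only: sm_add)
    also have "\<dots> \<le> C * (D (smul (of_nat n) x) (smul (of_nat n) y) + D (smul (of_nat n) z) (smul (of_nat n) z)) + 2 * C0"
      using ha by blast
    finally have "D (smul (of_nat n) (x + z)) (smul (of_nat n) (y + z)) \<le> C * D (smul (of_nat n) x) (smul (of_nat n) y) + 2 * C0"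
      by simp
    then have "D (smul (of_nat n) (x + z)) (smul (of_nat n) (y + z)) / real n \<le> (C * D (smul (of_nat n) x) (smul (of_nat n) y) + 2 * C0) / real n"
      using n by (simp add: divide_right_mono)
    then show "D (smul (of_nat n) (x + z)) (smul (of_nat n) (y + z)) / real n \<le>
        C * (D (smul (of_nat n) x) (smul (of_nat n) y) / real n) + 2 * C0 / real n + 0"
      by (simp add: add_divide_distrib)
  qed
  then show "\<delta> (x + z) (y + z) \<le> C * \<delta> x y" by simp
qed

lemma delta_transl: "\<delta> (x + z) (y + z) = \<delta> x y"
proof (rule antisym)
  show "\<delta> (x + z) (y + z) \<le> \<delta> x y" by (rule delta_transl_le)
  have "\<delta> (x + z + - z) (y + z + - z) \<le> \<delta> (x + z) (y + z)" by (rule delta_transl_le)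
  then show "\<delta> x y \<le> \<delta> (x + z) (y + z)" by simp
qed

lemma delta_diff: "\<delta> x y = \<delta> (x - y) 0"
  using delta_transl[where x=x and y=y and z="- y"] by simp

lemma delta_unit: assumes v: "norm v = 1" shows "\<delta> (smul v x) (smul v y) = \<delta> x y"
  unfolding delta0_def by (simp only: sm_nat_comm D_unit[OF v])

lemma delta_real: assumes t: "t \<ge> 0" shows "\<delta> (smul (of_real t) x) (smul (of_real t) y) = t * \<delta> x y"
proof (rule antisym)
  have eqn: "smul (of_nat n) (smul (of_real t) w) = smul (of_real t) (smul (of_nat n) w)" for n w
    by (rule sm_real_comm[symmetric])
  show "\<delta> (smul (of_real t) x) (smul (of_real t) y) \<le> t * \<delta> x y"
  proof (rule le_all_C)
    fix C :: real assume C: "C > 1"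
    obtain C2 C3 where C2: "C2 \<ge> 0" and C3: "C3 \<ge> 0" and h: "\<forall>t x y. t \<ge> 0 \<longrightarrow>
       t * D x y / C - C2 * t - C3 \<le> D (smul (of_real t) x) (smul (of_real t) y) \<and>
       D (smul (of_real t) x) (smul (of_real t) y) \<le> C * t * D x y + C2 * t + C3"
      using D_real_scale[OF C] by blast
    have "\<delta> (smul (of_real t) x) (smul (of_real t) y) \<le> (C * t) * \<delta> x y + 0"
    proof (rule lim_le[OF seq_lim seq_lim, where e = "C2 * t + C3"])
      fix n :: nat assume n: "n \<ge> 1"
      have "D (smul (of_nat n) (smul (of_real t) x)) (smul (of_nat n) (smul (of_real t) y)) \<le>
          C * t * D (smul (of_nat n) x) (smul (of_nat n) y) + (C2 * t + C3)"
        unfolding eqn using h t by (simp add: add.assoc)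
      then have "D (smul (of_nat n) (smul (of_real t) x)) (smul (of_nat n) (smul (of_real t) y)) / real n \<le>
          (C * t * D (smul (of_nat n) x) (smul (of_nat n) y) + (C2 * t + C3)) / real n"
        using n by (simp add: divide_right_mono)
      then show "D (smul (of_nat n) (smul (of_real t) x)) (smul (of_nat n) (smul (of_real t) y)) / real n \<le>
          C * t * (D (smul (of_nat n) x) (smul (of_nat n) y) / real n) + (C2 * t + C3) / real n + 0"
        by (simp add: add_divide_distrib)
    qed
    then show "\<delta> (smul (of_real t) x) (smul (of_real t) y) \<le> C * (t * \<delta> x y)" by simp
  qed
  show "t * \<delta> x y \<le> \<delta> (smul (of_real t) x) (smul (of_real t) y)"
  proof (rule le_all_C)
    fix C :: real assume C: "C > 1"
    obtain C2 C3 where C2: "C2 \<ge> 0" and C3: "C3 \<ge> 0" and h: "\<forall>t x y. t \<ge> 0 \<longrightarrow>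
       t * D x y / C - C2 * t - C3 \<le> D (smul (of_real t) x) (smul (of_real t) y) \<and>
       D (smul (of_real t) x) (smul (of_real t) y) \<le> C * t * D x y + C2 * t + C3"
      using D_real_scale[OF C] by blast
    have "(t / C) * \<delta> x y - 0 \<le> \<delta> (smul (of_real t) x) (smul (of_real t) y)"
    proof (rule lim_ge[OF seq_lim seq_lim, where e = "C2 * t + C3"])
      fix n :: nat assume n: "n \<ge> 1"
      have "t * D (smul (of_nat n) x) (smul (of_nat n) y) / C - C2 * t - C3 \<le>
          D (smul (of_nat n) (smul (of_real t) x)) (smul (of_nat n) (smul (of_real t) y))"
        unfolding eqn using h t by blast
      then have "(t * D (smul (of_nat n) x) (smul (of_nat n) y) / C - C2 * t - C3) / real n \<le>
          D (smul (of_nat n) (smul (of_real t) x)) (smul (of_nat n) (smul (of_real t) y)) / real n"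
        using n by (simp add: divide_right_mono)
      moreover have "(t * D (smul (of_nat n) x) (smul (of_nat n) y) / C - C2 * t - C3) / real n =
          t / C * (D (smul (of_nat n) x) (smul (of_nat n) y) / real n) - (C2 * t + C3) / real n - 0"
        using n by (simp add: field_simps)
      ultimately show "t / C * (D (smul (of_nat n) x) (smul (of_nat n) y) / real n) - (C2 * t + C3) / real n - 0 \<le>
          D (smul (of_nat n) (smul (of_real t) x)) (smul (of_nat n) (smul (of_real t) y)) / real n" by simp
    qed
    then have "t * \<delta> x y / C \<le> \<delta> (smul (of_real t) x) (smul (of_real t) y)" by simp
    then show "t * \<delta> x y \<le> C * \<delta> (smul (of_real t) x) (smul (of_real t) y)"
      using C by (simp add: divide_le_eq mult.commute)
  qed
qed

end

context P9 begin

lemma delta_scale: "\<delta> (smul a x) 0 = norm a * \<delta> x 0"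
proof (cases "a = 0")
  case True then show ?thesis by (simp add: delta_self)
next
  case False
  define t where "t = norm a"
  define v where "v = of_real (inverse t) * a"
  have t: "t > 0" using False unfolding t_def by simp
  have v: "norm v = 1" unfolding v_def t_def using False by (simp add: norm_mult norm_inverse)
  have av: "a = of_real t * v" unfolding v_def using t by (simp add: mult.assoc[symmetric] of_real_mult[symmetric])
  have "\<delta> (smul a x) 0 = \<delta> (smul (of_real t) (smul v x)) (smul (of_real t) (smul v 0))"
    by (simp add: av sm_mult)
  also have "\<dots> = t * \<delta> (smul v x) (smul v 0)" using delta_real[of t "smul v x" 0] t by simp
  also have "\<dots> = t * \<delta> x 0" by (simp only: delta_unit[OF v])
  finally show ?thesis unfolding t_def .
qed

lemma iso_D:
  assumes A: "A > 1"
  shows "\<exists>B\<ge>0. \<forall>x y. D x y / A - B \<le> \<delta> (x - y) 0 \<and> \<delta> (x - y) 0 \<le> A * D x y + B"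
proof -
  obtain B1 where B1: "B1 \<ge> 0" "\<forall>x y. \<delta> x y \<le> A * D x y + B1" using delta_up[OF A] by blast
  obtain B2 where B2: "B2 \<ge> 0" "\<forall>x y. D x y / A - B2 \<le> \<delta> x y" using delta_low[OF A] by blast
  have "\<forall>x y. D x y / A - (B1 + B2) \<le> \<delta> (x - y) 0 \<and> \<delta> (x - y) 0 \<le> A * D x y + (B1 + B2)"
  proof (intro allI)
    fix x y
    show "D x y / A - (B1 + B2) \<le> \<delta> (x - y) 0 \<and> \<delta> (x - y) 0 \<le> A * D x y + (B1 + B2)"
    proof -
      have e: "\<delta> (x - y) 0 = \<delta> x y" using delta_diff[of x y] by simp
      have u: "\<delta> x y \<le> A * D x y + B1" using B1 by blast
      have l: "D x y / A - B2 \<le> \<delta> x y" using B2 by blast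
      show ?thesis unfolding e using u l B1(1) B2(1) by linarith
    qed
  qed
  moreover have "B1 + B2 \<ge> 0" using B1 B2 by simp
  ultimately show ?thesis by blast
qed

lemma iso_d:
  assumes A: "A > 1"
  shows "\<exists>B\<ge>0. \<forall>x y. d x y / A - B \<le> \<delta> (x - y) 0 \<and> \<delta> (x - y) 0 \<le> A * d x y + B"
proof -
  define c where "c = sqrt A"
  have c1: "c > 1" using A unfolding c_def by simp
  have cc: "c * c = A" using A unfolding c_def by simp
  obtain B1 where B1: "B1 \<ge> 0" "\<forall>x y. \<delta> x y \<le> c * D x y + B1" using delta_up[OF c1] by blast
  obtain B2 where B2: "B2 \<ge> 0" "\<forall>x y. d x y / c - B2 \<le> D x y \<and> D x y \<le> c * d x y + B2" using D_vs_d[OF c1] by blast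
  obtain B3 where B3: "B3 \<ge> 0" "\<forall>x y. D x y / c - B3 \<le> \<delta> x y" using delta_low[OF c1] by blast
  define B where "B = c * B2 + B1 + B2 + B3"
  have "d x y / A - B \<le> \<delta> (x - y) 0 \<and> \<delta> (x - y) 0 \<le> A * d x y + B" for x y
  proof
    have e: "\<delta> (x - y) 0 = \<delta> x y" using delta_diff[of x y] by simp
    have "\<delta> x y \<le> c * D x y + B1" using B1 by blast
    also have "c * D x y \<le> c * (c * d x y + B2)" using B2 c1 by (intro mult_left_mono) auto
    also have "c * (c * d x y + B2) = A * d x y + c * B2" using cc by (simp add: algebra_simps)
    finally show "\<delta> (x - y) 0 \<le> A * d x y + B" unfolding e B_def using B1 B2 B3 by simp
    have "(d x y / c - B2) / c \<le> D x y / c" using B2 c1 by (intro divide_right_mono) auto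
    moreover have "(d x y / c - B2) / c = d x y / A - B2 / c" unfolding cc[symmetric] using c1 by (simp add: field_simps)
    moreover have "B2 / c \<le> B2" using B2 c1 by (simp add: divide_le_eq mult_le_cancel_left1)
    moreover have "D x y / c - B3 \<le> \<delta> x y" using B3 by blast
    moreover have "0 \<le> c * B2" using B2 c1 by simp
    ultimately show "d x y / A - B \<le> \<delta> (x - y) 0" unfolding e B_def using B1 by linarith
  qed
  moreover have "B \<ge> 0" unfolding B_def using B1 B2 B3 c1 by simp
  ultimately show ?thesis by blast
qed

end

theorem proposition9:
  fixes smul :: "'k::real_normed_div_algebra \<Rightarrow> 'e::ab_group_add \<Rightarrow> 'e"
    and d :: "'e \<Rightarrow> 'e \<Rightarrow> real"
    and \<mu> :: "'k measure"
  assumes mvs: "metric_vector_space smul d"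
    and am: "asymptotically_multiplicative smul d"
    and unb: "\<And>F. linear_subspace smul F \<Longrightarrow> F \<noteq> {0} \<Longrightarrow> \<not> (\<exists>B. \<forall>x\<in>F. \<forall>y\<in>F. d x y \<le> B)"
    and sumc: "\<forall>C1>1. \<exists>C0\<ge>0. \<forall>n\<ge>2. \<forall>x y :: nat \<Rightarrow> 'e.
                 d (\<Sum>i<n. x i) (\<Sum>i<n. y i) \<le> C1 * (\<Sum>i<n. d (x i) (y i)) + real n * C0"
    and haar: "haar_prob_unit_sphere \<mu>"
  shows "(\<forall>x y z. delta0 \<mu> smul d (x + z) (y + z) = delta0 \<mu> smul d x y) \<and>
         is_norm smul (\<lambda>x. delta0 \<mu> smul d x 0) \<and>
         (\<forall>x y. delta0 \<mu> smul d x y = delta0 \<mu> smul d (x - y) 0) \<and>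
         asymptotically_isometric (\<lambda>x y. delta0 \<mu> smul d (x - y) 0) (d0 \<mu> smul d) \<and>
         asymptotically_isometric (\<lambda>x y. delta0 \<mu> smul d (x - y) 0) d"
proof -
  interpret P: P9 smul d \<mu> by (rule P9.intro[OF mvs am sumc haar])
  have T: "\<forall>x y z. delta0 \<mu> smul d (x + z) (y + z) = delta0 \<mu> smul d x y"
    using P.delta_transl by blast
  have Df: "\<forall>x y. delta0 \<mu> smul d x y = delta0 \<mu> smul d (x - y) 0"
    using P.delta_diff by blast
  have I1: "asymptotically_isometric (\<lambda>x y. delta0 \<mu> smul d (x - y) 0) (d0 \<mu> smul d)"
    unfolding asymptotically_isometric_def using P.iso_D by blast
  have I2: "asymptotically_isometric (\<lambda>x y. delta0 \<mu> smul d (x - y) 0) d"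
    unfolding asymptotically_isometric_def using P.iso_d by blast
  have zero: "delta0 \<mu> smul d x 0 = 0 \<longleftrightarrow> x = 0" for x
  proof
    assume "x = 0" then show "delta0 \<mu> smul d x 0 = 0" by (simp add: P.delta_self)
  next
    assume x0: "delta0 \<mu> smul d x 0 = 0"
    show "x = 0"
    proof (rule ccontr)
      assume nx: "x \<noteq> 0"
      define F where "F = range (\<lambda>a. smul a x)"
      have ls: "linear_subspace smul F"
        unfolding linear_subspace_def F_def
      proof (intro conjI ballI allI)
        show "0 \<in> range (\<lambda>a. smul a x)" using P.sm_zero_left[of x] by (metis rangeI)
      next
        fix p q assume "p \<in> range (\<lambda>a. smul a x)" "q \<in> range (\<lambda>a. smul a x)"
        then obtain a b where "p = smul a x" "q = smul b x" by blast
        then show "p + q \<in> range (\<lambda>a. smul a x)" by (metis P.sm_ladd rangeI)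
      next
        fix c p assume "p \<in> range (\<lambda>a. smul a x)"
        then obtain a where "p = smul a x" by blast
        then show "smul c p \<in> range (\<lambda>a. smul a x)" by (metis P.sm_mult rangeI)
      qed
      have nz: "F \<noteq> {0}"
      proof
        assume "F = {0}"
        moreover have "x \<in> F" unfolding F_def using P.sm_one[of x] by (metis rangeI)
        ultimately show False using nx by blast
      qed
      obtain B where B: "B \<ge> 0" "\<forall>p q. d p q / 2 - B \<le> delta0 \<mu> smul d (p - q) 0"
        using P.iso_d[of 2] by force
      have "\<forall>p\<in>F. \<forall>q\<in>F. d p q \<le> 2 * B"
      proof (intro ballI)
        fix p q assume "p \<in> F" "q \<in> F"
        then obtain a b where ab: "p = smul a x" "q = smul b x" unfolding F_def by blast
        have "p - q = smul (a - b) x" unfolding ab by (simp only: P.sm_ldiff)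
        then have "delta0 \<mu> smul d (p - q) 0 = 0" using x0 by (simp add: P.delta_scale)
        then show "d p q \<le> 2 * B" using B(2)[rule_format, of p q] by simp
      qed
      then show False using unb[OF ls nz] by blast
    qed
  qed
  have N: "is_norm smul (\<lambda>x. delta0 \<mu> smul d x 0)"
    unfolding is_norm_def
  proof (intro conjI allI)
    fix x show "0 \<le> delta0 \<mu> smul d x 0" by (rule P.delta_nonneg)
  next
    fix x show "delta0 \<mu> smul d x 0 = 0 \<longleftrightarrow> x = 0" by (rule zero)
  next
    fix a x show "delta0 \<mu> smul d (smul a x) 0 = norm a * delta0 \<mu> smul d x 0" by (rule P.delta_scale)
  next
    fix x y
    have "delta0 \<mu> smul d (x + y) 0 \<le> delta0 \<mu> smul d (x + y) y + delta0 \<mu> smul d y 0" by (rule P.delta_tri)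
    moreover have "delta0 \<mu> smul d (x + y) y = delta0 \<mu> smul d x 0"
      using P.delta_transl[where x = x and y = 0 and z = y] by simp
    ultimately show "delta0 \<mu> smul d (x + y) 0 \<le> delta0 \<mu> smul d x 0 + delta0 \<mu> smul d y 0" by simp
  qed
  show ?thesis using T N Df I1 I2 by blast
qed

end
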